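(* For any $(\boldsymbol{x}^1,\boldsymbol{x}^2),(\boldsymbol{x}^{\star,1},\boldsymbol{x}^{\star,2})\in(\mathbb{T}^3\times\mathbb{T}^3)\setminus\Delta$ there exist $N\in\mathbb{N}$ and $\underline{\omega}^N=(\omega_1,\dots,\omega_N)\in\Omega_0^N$ such that $$f_{\underline{\omega}^N}(\boldsymbol{x}^1)=\boldsymbol{x}^{\star,1}\qquad\text{and}\qquad f_{\underline{\omega}^N}(\boldsymbol{x}^2)=\boldsymbol{x}^{\star,2}.$$
   Context: $\mathbb{T}^3=\mathbb{R}^3/(2\pi\mathbb{Z})^3$ with points $\boldsymbol{x}=(x,y,z)$; $\Delta=\{(\boldsymbol{x}^1,\boldsymbol{x}^2)\in\mathbb{T}^3\times\mathbb{T}^3:\boldsymbol{x}^1=\boldsymbol{x}^2\}$. Fix $U>0$ and let $\Omega_0=[-U,U]^3\times[0,2\pi)^3$, with elements $\omega=(\mathsf{A},\mathsf{B},\mathsf{C},\alpha,\beta,\gamma)$. Define maps of $\mathbb{T}^3$: $f_{(\mathsf{A},\alpha)}(x,y,z)=(x+\mathsf{A}\sin(z+\alpha),\ y+\mathsf{A}\cos(z+\alpha),\ z)$, $f_{(\mathsf{B},\beta)}(x,y,z)=(x,\ y+\mathsf{B}\sin(x+\beta),\ z+\mathsf{B}\cos(x+\beta))$, $f_{(\mathsf{C},\gamma)}(x,y,z)=(x+\mathsf{C}\cos(y+\gamma),\ y,\ z+\mathsf{C}\sin(y+\gamma))$, and $f_\omega=f_{(\mathsf{C},\gamma)}\circ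 f_{(\mathsf{B},\beta)}\circ f_{(\mathsf{A},\alpha)}$. For $\underline{\omega}^N=(\omega_1,\dots,\omega_N)$, $f_{\underline{\omega}^N}=f_{\omega_N}\circ\cdots\circ f_{\omega_1}$. *)

theory Defs
  imports Complex_Main
begin

text \<open>Points of the torus T^3 = R^3/(2 pi Z)^3 are represented by real triples;
  two triples represent the same torus point iff all coordinate differences
  lie in 2 pi Z.\<close>

type_synonym pt = "real \<times> real \<times> real"
type_synonym param = "real \<times> real \<times> real \<times> real \<times> real \<times> real"

definition tcong :: "real \<Rightarrow> real \<Rightarrow> bool" where
  "tcong a b \<longleftrightarrow> (\<exists>k::int. a - b = 2 * pi * of_int k)"

definition torus_eq :: "pt \<Rightarrow> pt \<Rightarrow> bool" where
  "torus_eq p q \<longleftrightarrow> (case p of (x, y, z) \<Rightarrow> case q of (x', y', z') \<Rightarrow>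
      tcong x x' \<and> tcong y y' \<and> tcong z z')"

definition fA :: "real \<Rightarrow> real \<Rightarrow> pt \<Rightarrow> pt" where
  "fA A \<alpha> p = (case p of (x, y, z) \<Rightarrow> (x + A * sin (z + \<alpha>), y + A * cos (z + \<alpha>), z))"

definition fB :: "real \<Rightarrow> real \<Rightarrow> pt \<Rightarrow> pt" where
  "fB B \<beta> p = (case p of (x, y, z) \<Rightarrow> (x, y + B * sin (x + \<beta>), z + B * cos (x + \<beta>)))"

definition fC :: "real \<Rightarrow> real \<Rightarrow> pt \<Rightarrow> pt" where
  "fC C \<gamma> p = (case p of (x, y, z) \<Rightarrow> (x + C * cos (y + \<gamma>), y, z + C * sin (y + \<gamma>)))"

definition f_omega :: "param \<Rightarrow> pt \<Rightarrow> pt" where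
  "f_omega w = (case w of (A, B, C, \<alpha>, \<beta>, \<gamma>) \<Rightarrow> fC C \<gamma> \<circ> fB B \<beta> \<circ> fA A \<alpha>)"

definition Omega0 :: "real \<Rightarrow> param set" where
  "Omega0 U = {(A, B, C, \<alpha>, \<beta>, \<gamma>). A \<in> {-U..U} \<and> B \<in> {-U..U} \<and> C \<in> {-U..U}
      \<and> \<alpha> \<in> {0..<2*pi} \<and> \<beta> \<in> {0..<2*pi} \<and> \<gamma> \<in> {0..<2*pi}}"

text \<open>f_{omega^N} = f_{omega_N} o ... o f_{omega_1}: the first list element is applied first.\<close>
definition f_seq :: "param list \<Rightarrow> pt \<Rightarrow> pt" where
  "f_seq ws = fold f_omega ws"

end

theory Submission
  imports Defs
begin

definition GS :: "real \<Rightarrow> param set" where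
  "GS U = {(A,0,0,a,0,0) | A a. \<bar>A\<bar> \<le> U \<and> 0 \<le> a \<and> a < 2*pi}
        \<union> {(0,B,0,0,b,0) | B b. \<bar>B\<bar> \<le> U \<and> 0 \<le> b \<and> b < 2*pi}
        \<union> {(0,0,C,0,0,c) | C c. \<bar>C\<bar> \<le> U \<and> 0 \<le> c \<and> c < 2*pi}"

definition reach :: "real \<Rightarrow> pt \<Rightarrow> pt \<Rightarrow> pt \<Rightarrow> pt \<Rightarrow> bool" where
  "reach U p q p' q' \<longleftrightarrow> (\<exists>ws. set ws \<subseteq> GS U \<and> f_seq ws p = p' \<and> f_seq ws q = q')"

definition inv_step :: "param \<Rightarrow> param" where
  "inv_step w = (case w of (A,B,C,a,b,c) \<Rightarrow> (-A,-B,-C,a,b,c))"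

lemma fomA: "f_omega (A,0,0,a,0,0) = fA A a"
  by (rule ext) (auto simp: f_omega_def fA_def fB_def fC_def split: prod.splits)
lemma fomB: "f_omega (0,B,0,0,b,0) = fB B b"
  by (rule ext) (auto simp: f_omega_def fA_def fB_def fC_def split: prod.splits)
lemma fomC: "f_omega (0,0,C,0,0,c) = fC C c"
  by (rule ext) (auto simp: f_omega_def fA_def fB_def fC_def split: prod.splits)

lemma GS_sub: "U \<ge> 0 \<Longrightarrow> GS U \<subseteq> Omega0 U"
  unfolding GS_def Omega0_def by auto

lemma inv_GS: "w \<in> GS U \<Longrightarrow> inv_step w \<in> GS U \<and> (\<forall>p. f_omega (inv_step w) (f_omega w p) = p)"
  unfolding GS_def inv_step_def
  by (auto simp: fomA fomB fomC fA_def fB_def fC_def split: prod.splits)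

lemma f_seq_inv: "set ws \<subseteq> GS U \<Longrightarrow> f_seq (rev (map inv_step ws)) (f_seq ws p) = p"
proof (induction ws arbitrary: p)
  case Nil
  then show ?case by (simp add: f_seq_def)
next
  case (Cons a ws)
  have h: "f_omega (inv_step a) (f_omega a p) = p" using inv_GS[of a U] Cons.prems by (cases p) auto
  show ?case using Cons.IH Cons.prems by (simp add: f_seq_def h)
qed

lemma inv_set: "set ws \<subseteq> GS U \<Longrightarrow> set (rev (map inv_step ws)) \<subseteq> GS U"
  using inv_GS by auto

lemma reach_refl: "reach U p q p q"
  unfolding reach_def by (rule exI[of _ "[]"]) (simp add: f_seq_def)

lemma reach_sym: "reach U p q p' q' \<Longrightarrow> reach U p' q' p q"
  unfolding reach_def using f_seq_inv inv_set by metis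

lemma reach_trans: "reach U p q p' q' \<Longrightarrow> reach U p' q' p'' q'' \<Longrightarrow> reach U p q p'' q''"
  unfolding reach_def
proof (elim exE conjE)
  fix ws1 ws2
  assume "set ws1 \<subseteq> GS U" "f_seq ws1 p = p'" "f_seq ws1 q = q'"
     "set ws2 \<subseteq> GS U" "f_seq ws2 p' = p''" "f_seq ws2 q' = q''"
  then show "\<exists>ws. set ws \<subseteq> GS U \<and> f_seq ws p = p'' \<and> f_seq ws q = q''"
    by (intro exI[of _ "ws1 @ ws2"]) (auto simp: f_seq_def)
qed

lemma repA: "f_seq (replicate n (A,0,0,a,0,0)) (x,y,z) =
   (x + real n * A * sin (z + a), y + real n * A * cos (z + a), z)"
proof (induction n arbitrary: x y)
  case 0 then show ?case by (simp add: f_seq_def)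
next
  case (Suc n) then show ?case by (simp add: f_seq_def fomA fA_def algebra_simps)
qed

lemma repB: "f_seq (replicate n (0,B,0,0,b,0)) (x,y,z) =
   (x, y + real n * B * sin (x + b), z + real n * B * cos (x + b))"
proof (induction n arbitrary: y z)
  case 0 then show ?case by (simp add: f_seq_def)
next
  case (Suc n) then show ?case by (simp add: f_seq_def fomB fB_def algebra_simps)
qed

lemma repC: "f_seq (replicate n (0,0,C,0,0,c)) (x,y,z) =
   (x + real n * C * cos (y + c), y, z + real n * C * sin (y + c))"
proof (induction n arbitrary: x z)
  case 0 then show ?case by (simp add: f_seq_def)
next
  case (Suc n) then show ?case by (simp add: f_seq_def fomC fC_def algebra_simps)
qed

lemma core:
  assumes "U > 0" "c \<noteq> 0"
  shows "\<exists>n::nat. \<exists>A t. \<bar>A\<bar> \<le> U \<and> real n * A * c * cos t = a \<and> real n * A * c * sin t = b"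
proof (cases "a = 0 \<and> b = 0")
  case True
  then show ?thesis by (intro exI[of _ 0] exI[of _ 0]) (simp add: assms less_imp_le)
next
  case False
  define r where "r = sqrt (a^2 + b^2)"
  have s0: "a^2 + b^2 > 0" using False
    by (metis power2_eq_square sum_squares_gt_zero_iff)
  have r0: "r > 0" using s0 unfolding r_def by simp
  have r2: "r^2 = a^2 + b^2" unfolding r_def using s0 by simp
  have "(a/r)^2 + (b/r)^2 = (a^2 + b^2) / r^2" by (simp add: power_divide add_divide_distrib)
  then have "(a/r)^2 + (b/r)^2 = 1" using r2 s0 False by simp
  then obtain t where t: "a/r = cos t" "b/r = sin t" by (rule sincos_total_2pi)
  obtain n :: nat where n: "r / (U * \<bar>c\<bar>) < real n" using reals_Archimedean2 by blast
  have "r / (U * \<bar>c\<bar>) > 0" using r0 assms by simp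
  then have npos: "real n > 0" using n by linarith
  define A where "A = r / (real n * c)"
  have "\<bar>A\<bar> = r / (real n * \<bar>c\<bar>)" using r0 npos unfolding A_def by (simp add: abs_mult)
  also have "\<dots> \<le> U" using n npos assms r0
    by (simp add: divide_le_eq pos_divide_less_eq mult.commute mult.left_commute less_imp_le)
  finally have AU: "\<bar>A\<bar> \<le> U" .
  have nAc: "real n * A * c = r" using npos assms unfolding A_def by simp
  show ?thesis
    apply (rule exI[of _ n], rule exI[of _ A], rule exI[of _ t])
    using AU nAc t r0 by (simp add: field_simps)
qed

lemma phase: "\<exists>a. 0 \<le> a \<and> a < 2*pi \<and> cos (m + a) = cos t \<and> sin (m + a) = sin t"
proof -
  have "(cos (t - m))^2 + (sin (t - m))^2 = 1" by simp
  then obtain a where a: "0 \<le> a" "a < 2*pi" "cos (t - m) = cos a" "sin (t - m) = sin a"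
    by (rule sincos_total_2pi)
  have "cos (m + a) = cos (m + (t - m))" "sin (m + a) = sin (m + (t - m))"
    using a by (simp_all only: cos_add sin_add)
  then show ?thesis using a by auto
qed

lemma two:
  assumes "U > 0" "sin ((z2 - z1)/2) \<noteq> 0"
  shows "\<exists>n::nat. \<exists>A a. \<bar>A\<bar> \<le> U \<and> 0 \<le> a \<and> a < 2*pi \<and>
     real n * A * (sin (z2 + a) - sin (z1 + a)) = X \<and> real n * A * (cos (z2 + a) - cos (z1 + a)) = Y"
proof -
  define c where "c = 2 * sin ((z2 - z1)/2)"
  have c0: "c \<noteq> 0" using assms unfolding c_def by simp
  obtain n A t where nAt: "\<bar>A\<bar> \<le> U" "real n * A * c * cos t = X" "real n * A * c * sin t = - Y"
    using core[OF assms(1) c0] by blast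
  obtain a where a: "0 \<le> a" "a < 2*pi" "cos ((z1+z2)/2 + a) = cos t" "sin ((z1+z2)/2 + a) = sin t"
    using phase by blast
  have e1: "sin (z2 + a) - sin (z1 + a) = c * cos ((z1+z2)/2 + a)"
    unfolding c_def sin_diff_sin by (simp add: field_simps)
  have e2: "cos (z2 + a) - cos (z1 + a) = - c * sin ((z1+z2)/2 + a)"
  proof -
    have "cos (z2 + a) - cos (z1 + a) = 2 * sin ((z2 + a + (z1 + a)) / 2) * sin ((z1 + a - (z2 + a)) / 2)"
      by (rule cos_diff_cos)
    also have "(z2 + a + (z1 + a)) / 2 = (z1+z2)/2 + a" by (simp add: field_simps)
    also have "(z1 + a - (z2 + a)) / 2 = - ((z2 - z1)/2)" by (simp add: field_simps)
    finally show ?thesis unfolding c_def by simp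
  qed
  have g1: "real n * A * (sin (z2 + a) - sin (z1 + a)) = real n * A * c * cos t"
    by (simp add: e1 a)
  have g2: "real n * A * (cos (z2 + a) - cos (z1 + a)) = - (real n * A * c * sin t)"
    by (simp add: e2 a)
  show ?thesis
    apply (rule exI[of _ n], rule exI[of _ A], rule exI[of _ a])
    using nAt a g1 g2 by simp
qed

lemma one:
  assumes "U > 0"
  shows "\<exists>n::nat. \<exists>A a. \<bar>A\<bar> \<le> U \<and> 0 \<le> a \<and> a < 2*pi \<and>
     real n * A * sin (z + a) = X \<and> real n * A * cos (z + a) = Y"
proof -
  obtain n A t where nAt: "\<bar>A\<bar> \<le> U" "real n * A * 1 * cos t = Y" "real n * A * 1 * sin t = X"
    using core[of U 1 Y X] assms by auto
  obtain a where a: "0 \<le> a" "a < 2*pi" "cos (z + a) = cos t" "sin (z + a) = sin t"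
    using phase by blast
  show ?thesis
    apply (rule exI[of _ n], rule exI[of _ A], rule exI[of _ a])
    using nAt a by simp
qed

lemma repA_GS: "\<bar>A\<bar> \<le> U \<Longrightarrow> 0 \<le> a \<Longrightarrow> a < 2*pi \<Longrightarrow> set (replicate n (A,0,0,a,0,0)) \<subseteq> GS U"
  unfolding GS_def by auto
lemma repB_GS: "\<bar>A\<bar> \<le> U \<Longrightarrow> 0 \<le> a \<Longrightarrow> a < 2*pi \<Longrightarrow> set (replicate n (0,A,0,0,a,0)) \<subseteq> GS U"
  unfolding GS_def by auto
lemma repC_GS: "\<bar>A\<bar> \<le> U \<Longrightarrow> 0 \<le> a \<Longrightarrow> a < 2*pi \<Longrightarrow> set (replicate n (0,0,A,0,0,a)) \<subseteq> GS U"
  unfolding GS_def by auto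

lemma LA:
  assumes "U > 0" "sin ((z2 - z1)/2) \<noteq> 0"
  shows "\<exists>x1' y1' x2' y2'. reach U (x1,y1,z1) (x2,y2,z2) (x1',y1',z1) (x2',y2',z2)
     \<and> x2' - x1' = X \<and> y2' - y1' = Y"
proof -
  obtain n A a where h: "\<bar>A\<bar> \<le> U" "0 \<le> a" "a < 2*pi"
     "real n * A * (sin (z2 + a) - sin (z1 + a)) = X - (x2 - x1)"
     "real n * A * (cos (z2 + a) - cos (z1 + a)) = Y - (y2 - y1)"
    using two[OF assms] by blast
  have "reach U (x1,y1,z1) (x2,y2,z2) (x1 + real n * A * sin (z1 + a), y1 + real n * A * cos (z1 + a), z1) (x2 + real n * A * sin (z2 + a), y2 + real n * A * cos (z2 + a), z2)"
    unfolding reach_def using repA repA_GS[OF h(1-3)] by blast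
  moreover have "(x2 + real n * A * sin (z2 + a)) - (x1 + real n * A * sin (z1 + a)) = X" using h(4) by (simp add: algebra_simps)
  moreover have "(y2 + real n * A * cos (z2 + a)) - (y1 + real n * A * cos (z1 + a)) = Y" using h(5) by (simp add: algebra_simps)
  ultimately show ?thesis by blast
qed

lemma LB:
  assumes "U > 0" "sin ((x2 - x1)/2) \<noteq> 0"
  shows "\<exists>y1' z1' y2' z2'. reach U (x1,y1,z1) (x2,y2,z2) (x1,y1',z1') (x2,y2',z2')
     \<and> y2' - y1' = Y \<and> z2' - z1' = Z"
proof -
  obtain n A a where h: "\<bar>A\<bar> \<le> U" "0 \<le> a" "a < 2*pi"
     "real n * A * (sin (x2 + a) - sin (x1 + a)) = Y - (y2 - y1)"
     "real n * A * (cos (x2 + a) - cos (x1 + a)) = Z - (z2 - z1)"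
    using two[OF assms] by blast
  have "reach U (x1,y1,z1) (x2,y2,z2) (x1, y1 + real n * A * sin (x1 + a), z1 + real n * A * cos (x1 + a)) (x2, y2 + real n * A * sin (x2 + a), z2 + real n * A * cos (x2 + a))"
    unfolding reach_def using repB repB_GS[OF h(1-3)] by blast
  moreover have "(y2 + real n * A * sin (x2 + a)) - (y1 + real n * A * sin (x1 + a)) = Y" using h(4) by (simp add: algebra_simps)
  moreover have "(z2 + real n * A * cos (x2 + a)) - (z1 + real n * A * cos (x1 + a)) = Z" using h(5) by (simp add: algebra_simps)
  ultimately show ?thesis by blast
qed

lemma LC:
  assumes "U > 0" "sin ((y2 - y1)/2) \<noteq> 0"
  shows "\<exists>x1' z1' x2' z2'. reach U (x1,y1,z1) (x2,y2,z2) (x1',y1,z1') (x2',y2,z2')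
     \<and> x2' - x1' = X \<and> z2' - z1' = Z"
proof -
  obtain n A a where h: "\<bar>A\<bar> \<le> U" "0 \<le> a" "a < 2*pi"
     "real n * A * (sin (y2 + a) - sin (y1 + a)) = Z - (z2 - z1)"
     "real n * A * (cos (y2 + a) - cos (y1 + a)) = X - (x2 - x1)"
    using two[OF assms] by blast
  have "reach U (x1,y1,z1) (x2,y2,z2) (x1 + real n * A * cos (y1 + a), y1, z1 + real n * A * sin (y1 + a)) (x2 + real n * A * cos (y2 + a), y2, z2 + real n * A * sin (y2 + a))"
    unfolding reach_def using repC repC_GS[OF h(1-3)] by blast
  moreover have "(x2 + real n * A * cos (y2 + a)) - (x1 + real n * A * cos (y1 + a)) = X" using h(5) by (simp add: algebra_simps)
  moreover have "(z2 + real n * A * sin (y2 + a)) - (z1 + real n * A * sin (y1 + a)) = Z" using h(4) by (simp add: algebra_simps)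
  ultimately show ?thesis by blast
qed


lemma LT:
  assumes "U > 0"
  shows "reach U (x,y,z) (x+pi,y,z) (0,0,0) (pi,0,0)"
proof -
  obtain n C g where h: "\<bar>C\<bar> \<le> U" "0 \<le> g" "g < 2*pi"
     "real n * C * sin (y + g) = - z" "real n * C * cos (y + g) = 0"
    using one[OF assms] by blast
  have r1: "reach U (x,y,z) (x+pi,y,z) (x,y,0) (x+pi,y,0)"
    unfolding reach_def using repC[of n C g] repC_GS[OF h(1-3)] h(4,5)
    by (intro exI[of _ "replicate n (0,0,C,0,0,g)"]) simp
  obtain m A a where k: "\<bar>A\<bar> \<le> U" "0 \<le> a" "a < 2*pi"
     "real m * A * sin (0 + a) = - x" "real m * A * cos (0 + a) = - y"
    using one[OF assms] by blast
  have r2: "reach U (x,y,0) (x+pi,y,0) (0,0,0) (pi,0,0)"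
    unfolding reach_def using repA[of m A a] repA_GS[OF k(1-3)] k(4,5)
    by (intro exI[of _ "replicate m (A,0,0,a,0,0)"]) simp
  show ?thesis using reach_trans[OF r1 r2] .
qed

lemma S2:
  assumes "U > 0" "sin ((x2 - x1)/2) \<noteq> 0"
  shows "reach U (x1,y1,z1) (x2,y2,z2) (0,0,0) (pi,0,0)"
proof -
  obtain ya za yb zb where a1: "reach U (x1,y1,z1) (x2,y2,z2) (x1,ya,za) (x2,yb,zb)"
    "yb - ya = 0" "zb - za = pi"
    using LB[OF assms, of y1 z1 y2 z2 0 pi] by blast
  have s1: "sin ((zb - za)/2) \<noteq> 0" using a1 by simp
  obtain xc yc xd yd where a2: "reach U (x1,ya,za) (x2,yb,zb) (xc,yc,za) (xd,yd,zb)"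
    "xd - xc = pi" "yd - yc = 0"
    using LA[OF assms(1) s1, of x1 ya x2 yb pi 0] by blast
  have s2: "sin ((xd - xc)/2) \<noteq> 0" using a2 by simp
  obtain ye ze yf zf where a3: "reach U (xc,yc,za) (xd,yd,zb) (xc,ye,ze) (xd,yf,zf)"
    "yf - ye = 0" "zf - ze = 0"
    using LB[OF assms(1) s2, of yc za yd zb 0 0] by blast
  have eq: "(xd,yf,zf) = (xc+pi,ye,ze)" using a2 a3 by simp
  have a4: "reach U (xc,ye,ze) (xd,yf,zf) (0,0,0) (pi,0,0)"
    unfolding eq by (rule LT[OF assms(1)])
  show ?thesis using reach_trans[OF reach_trans[OF reach_trans[OF a1(1) a2(1)] a3(1)] a4] .
qed

lemma ntc: "\<not> tcong a b \<Longrightarrow> sin ((b - a)/2) \<noteq> 0"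
proof
  assume n: "\<not> tcong a b" and "sin ((b - a)/2) = 0"
  then obtain i :: int where "(b - a)/2 = of_int i * pi" using sin_zero_iff_int2 by blast
  then have "a - b = 2 * pi * of_int (- i)" by (simp add: field_simps)
  then show False using n unfolding tcong_def by blast
qed

lemma S1:
  assumes "U > 0" "\<not> torus_eq p q"
  shows "\<exists>x1 y1 z1 x2 y2 z2. reach U p q (x1,y1,z1) (x2,y2,z2) \<and> sin ((x2 - x1)/2) \<noteq> 0"
proof -
  obtain a1 b1 c1 where p: "p = (a1,b1,c1)" by (cases p) auto
  obtain a2 b2 c2 where q: "q = (a2,b2,c2)" by (cases q) auto
  have "\<not> tcong a1 a2 \<or> \<not> tcong b1 b2 \<or> \<not> tcong c1 c2"
    using assms(2) unfolding p q torus_eq_def by auto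
  moreover
  { assume "\<not> tcong a1 a2"
    then have ?thesis using ntc reach_refl unfolding p q by blast }
  moreover
  { assume "\<not> tcong c1 c2"
    then have "sin ((c2 - c1)/2) \<noteq> 0" by (rule ntc)
    then obtain xa ya xb yb where "reach U (a1,b1,c1) (a2,b2,c2) (xa,ya,c1) (xb,yb,c2)"
      "xb - xa = pi"
      using LA[OF assms(1), of c2 c1 a1 b1 a2 b2 pi 0] by blast
    moreover have "sin ((xb - xa)/2) \<noteq> 0" using \<open>xb - xa = pi\<close> by simp
    ultimately have ?thesis unfolding p q by blast }
  moreover
  { assume "\<not> tcong b1 b2"
    then have "sin ((b2 - b1)/2) \<noteq> 0" by (rule ntc)
    then obtain xa za xb zb where "reach U (a1,b1,c1) (a2,b2,c2) (xa,b1,za) (xb,b2,zb)"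
      "xb - xa = pi"
      using LC[OF assms(1), of b2 b1 a1 c1 a2 c2 pi 0] by blast
    moreover have "sin ((xb - xa)/2) \<noteq> 0" using \<open>xb - xa = pi\<close> by simp
    ultimately have ?thesis unfolding p q by blast }
  ultimately show ?thesis by blast
qed

lemma NF:
  assumes "U > 0" "\<not> torus_eq p q"
  shows "reach U p q (0,0,0) (pi,0,0)"
proof -
  obtain x1 y1 z1 x2 y2 z2 where h: "reach U p q (x1,y1,z1) (x2,y2,z2)" "sin ((x2 - x1)/2) \<noteq> 0"
    using S1[OF assms] by blast
  show ?thesis using reach_trans[OF h(1) S2[OF assms(1) h(2)]] .
qed

theorem proposition3p6:
  fixes U :: real and x1 x2 xs1 xs2 :: pt
  assumes "U > 0"
    and "\<not> torus_eq x1 x2"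
    and "\<not> torus_eq xs1 xs2"
  shows "\<exists>(N::nat) ws. length ws = N \<and> set ws \<subseteq> Omega0 U \<and>
           torus_eq (f_seq ws x1) xs1 \<and> torus_eq (f_seq ws x2) xs2"
proof -
  have "reach U x1 x2 xs1 xs2"
    using reach_trans[OF NF[OF assms(1,2)] reach_sym[OF NF[OF assms(1,3)]]] .
  then obtain ws where ws: "set ws \<subseteq> GS U" "f_seq ws x1 = xs1" "f_seq ws x2 = xs2"
    unfolding reach_def by blast
  have refl: "torus_eq p p" for p :: pt
    unfolding torus_eq_def tcong_def by (cases p) (auto intro: exI[of _ 0])
  show ?thesis
    using ws GS_sub[of U] assms(1) refl by (intro exI[of _ "length ws"] exI[of _ ws]) auto
qed

end
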